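(* Let $\Omega\subset\mathbb{R}^n$ ($1\le n\le 3$) be a bounded domain, let $\mu_1,\mu_2,\alpha>0$, and impose on $\Omega$ either the Dirichlet or the Neumann boundary condition. Let $\rho_k$, $e_k$, $\beta^{\pm}_k(\lambda)$, $\lambda_0$, $\lambda_1$ be as in the context. Then: (1) Suppose $\lambda_0<\lambda_1$, and let $k_0\ge 1$ be an integer such that the minimum in the definition of $\lambda_0$ is achieved at $\rho_{k_0}$. Then $\beta^+_{k_0}(\lambda)$ is the first real eigenvalue of the linearized eigenvalue problem near $\lambda=\lambda_0$, and for every $k\in\mathbb{N}$ with $\rho_k=\rho_{k_0}$: $\beta^+_k(\lambda)<0$ if $\lambda<\lambda_0$, $\beta^+_k(\lambda)=0$ if $\lambda=\lambda_0$, $\beta^+_k(\lambda)>0$ if $\lambda>\lambda_0$; and $\mathrm{Re}\,\beta^{\pm}_j(\lambda_0)<0$ for every eigenvalue $\beta^{\pm}_j$ other than the $\beta^+_k$ with $\rho_k=\rho_{k_0}$. (2) Suppose $\lambda_1<\lambda_0$. Then $\beta^+_1(\lambda)=\overline{\beta^-_1(\lambda)}$ is a pair of first complex eigenvalues of the linearized eigenvalue problem near $\lambda=\lambda_1$, with $\mathrm{Re}\,\beta^+_1(\lambda)=\mathrm{Re}\,\beta^-_1(\lambda)$ being $<0$ if $\lambda<\lambda_1$, $=0$ if $\lambda=\lambda_1$, $>0$ if $\lambda>\lambda_1$; and $\mathrm{Re}\,\beta^{\pm}_k(\lambda_1)<0$ for all $k>1$.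
   Context: Linearized eigenvalue problem (for parameter $\lambda>0$): find $\beta$ and $v=(v_1,v_2)\neq 0$ with $\mu_1\Delta v_1+(\lambda-1)v_1+\alpha^2v_2=\beta v_1$, $\mu_2\Delta v_2-\lambda v_1-\alpha^2 v_2=\beta v_2$ in $\Omega$, with $v=0$ on $\partial\Omega$ (Dirichlet) or $\partial v/\partial n=0$ on $\partial\Omega$ (Neumann). Let $\rho_k$ ($k=1,2,\dots$, nondecreasing, repeated with multiplicity) and $e_k$ be the eigenvalues and eigenfunctions of $-\Delta e_k=\rho_k e_k$ with the same boundary condition. Let $M_k=\begin{pmatrix}-\mu_1\rho_k+\lambda-1&\alpha^2\\-\lambda&-\mu_2\rho_k-\alpha^2\end{pmatrix}$. All eigenvalues of the linearized problem are the eigenvalues $\beta^{\pm}_k(\lambda)$ of the matrices $M_k$, with eigenfunctions $\xi^{\pm}_k e_k$ where $M_k\xi^{\pm}_k=\beta^{\pm}_k\xi^{\pm}_k$, explicitly $\beta^{\pm}_k(\lambda)=\tfrac12[\lambda-(\mu_1\rho_k+\mu_2\rho_k+\alpha^2+1)]\pm\tfrac12\big[(\lambda-\mu_1\rho_k-\mu_2\rho_k-\alpha^2-1)^2+4(\lambda\mu_2\rho_k-(\mu_1\rho_k+1)(\mu_2\rho_k+\alpha^2))\big]^{1/2}$. Define $\lambda_0=\min_{\rho_k}\frac{1}{\mu_2\rho_k}(\mu_1\rho_k+1)(\mu_2\rho_k+\alpha^2)$ (terms with $\rho_k=0$ are interpreted as $+\infty$) and $\lambda_1=\mu_1\rho_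1+\mu_2\rho_1+\alpha^2+1$.
   Formalization: Part (1) assumes in addition that the minimum in the definition of $\lambda_0$ is achieved only at eigenvalues $\rho_k$ equal to $\rho_{k_0}$. The statement above fails without it. *)

theory Defs
  imports "HOL-Analysis.Analysis"
begin

datatype bc = Dirichlet | Neumann

text \<open>Abstract properties of the eigenvalue sequence rho 1 <= rho 2 <= ... (indexed from 1,
  repeated with multiplicity) of the Laplacian -Delta on a bounded (connected) domain with
  the boundary condition b: nonnegative, nondecreasing, tending to infinity, the first
  eigenvalue is simple, positive for Dirichlet and zero for Neumann.\<close>
definition laplace_spectrum :: "bc \<Rightarrow> (nat \<Rightarrow> real) \<Rightarrow> bool" where
  "laplace_spectrum b rho \<longleftrightarrow>
     (\<forall>k\<ge>1. 0 \<le> rho k) \<and>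
     (\<forall>k\<ge>1. rho k \<le> rho (Suc k)) \<and>
     filterlim rho at_top sequentially \<and>
     rho 1 < rho 2 \<and>
     (b = Dirichlet \<longrightarrow> 0 < rho 1) \<and>
     (b = Neumann \<longrightarrow> rho 1 = 0)"

definition Mmat :: "real \<Rightarrow> real \<Rightarrow> real \<Rightarrow> real \<Rightarrow> real \<Rightarrow> real^2^2" where
  "Mmat mu1 mu2 alpha r lam =
     (\<chi> i j. if i = 1 then (if j = 1 then - mu1 * r + lam - 1 else alpha\<^sup>2)
             else (if j = 1 then - lam else - mu2 * r - alpha\<^sup>2))"

definition trM :: "real \<Rightarrow> real \<Rightarrow> real \<Rightarrow> real \<Rightarrow> real \<Rightarrow> real" where
  "trM mu1 mu2 alpha r lam = lam - (mu1 * r + mu2 * r + alpha\<^sup>2 + 1)"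

definition discr :: "real \<Rightarrow> real \<Rightarrow> real \<Rightarrow> real \<Rightarrow> real \<Rightarrow> real" where
  "discr mu1 mu2 alpha r lam =
     (lam - mu1 * r - mu2 * r - alpha\<^sup>2 - 1)\<^sup>2
     + 4 * (lam * mu2 * r - (mu1 * r + 1) * (mu2 * r + alpha\<^sup>2))"

text \<open>beta^+ and beta^- (the eigenvalues of M_k) by the explicit formula; the square root
  of a negative discriminant is the principal complex square root.\<close>
definition beta_plus :: "real \<Rightarrow> real \<Rightarrow> real \<Rightarrow> real \<Rightarrow> real \<Rightarrow> complex" where
  "beta_plus mu1 mu2 alpha r lam =
     complex_of_real (trM mu1 mu2 alpha r lam) / 2
     + csqrt (complex_of_real (discr mu1 mu2 alpha r lam)) / 2"

definition beta_minus :: "real \<Rightarrow> real \<Rightarrow> real \<Rightarrow> real \<Rightarrow> real \<Rightarrow> complex" where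
  "beta_minus mu1 mu2 alpha r lam =
     complex_of_real (trM mu1 mu2 alpha r lam) / 2
     - csqrt (complex_of_real (discr mu1 mu2 alpha r lam)) / 2"

text \<open>The function whose minimum over positive rho_k defines lambda_0
  (terms with rho_k = 0 are +infinity and hence excluded).\<close>
definition gfun :: "real \<Rightarrow> real \<Rightarrow> real \<Rightarrow> real \<Rightarrow> real" where
  "gfun mu1 mu2 alpha r = (mu1 * r + 1) * (mu2 * r + alpha\<^sup>2) / (mu2 * r)"

definition lambda0 :: "real \<Rightarrow> real \<Rightarrow> real \<Rightarrow> (nat \<Rightarrow> real) \<Rightarrow> real" where
  "lambda0 mu1 mu2 alpha rho = (INF k\<in>{k. 1 \<le> k \<and> 0 < rho k}. gfun mu1 mu2 alpha (rho k))"

definition lambda1 :: "real \<Rightarrow> real \<Rightarrow> real \<Rightarrow> (nat \<Rightarrow> real) \<Rightarrow> real" where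
  "lambda1 mu1 mu2 alpha rho = mu1 * rho 1 + mu2 * rho 1 + alpha\<^sup>2 + 1"

end

theory Submission
  imports Defs
begin

lemma Re_csqrt_real: "Re (csqrt (complex_of_real d)) = sqrt (max d 0)"
  by (cases "d \<ge> 0") (auto simp: max_def)

lemma Im_csqrt_real: "Im (csqrt (complex_of_real d)) = sqrt (max (- d) 0)"
  by (cases "d \<ge> 0") (auto simp: max_def)

lemma Re_bp: "Re (beta_plus m1 m2 a r l) = trM m1 m2 a r l / 2 + sqrt (max (discr m1 m2 a r l) 0) / 2"
  by (simp add: beta_plus_def Re_csqrt_real)
lemma Im_bp: "Im (beta_plus m1 m2 a r l) = sqrt (max (- discr m1 m2 a r l) 0) / 2"
  by (simp add: beta_plus_def Im_csqrt_real)
lemma Re_bm: "Re (beta_minus m1 m2 a r l) = trM m1 m2 a r l / 2 - sqrt (max (discr m1 m2 a r l) 0) / 2"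
  by (simp add: beta_minus_def Re_csqrt_real)
lemma Im_bm: "Im (beta_minus m1 m2 a r l) = - sqrt (max (- discr m1 m2 a r l) 0) / 2"
  by (simp add: beta_minus_def Im_csqrt_real)

definition DD :: "real \<Rightarrow> real \<Rightarrow> real \<Rightarrow> real \<Rightarrow> real \<Rightarrow> real" where
  "DD m1 m2 a r l = (m1 * r + 1) * (m2 * r + a\<^sup>2) - l * m2 * r"

lemma discr_eq: "discr m1 m2 a r l = (trM m1 m2 a r l)\<^sup>2 - 4 * DD m1 m2 a r l"
  by (simp add: discr_def trM_def DD_def algebra_simps power2_eq_square)

lemma crit_le:
  fixes T D x :: real
  assumes "T \<le> 2 * x" "x\<^sup>2 - T * x + D \<ge> 0"
  shows "T / 2 + sqrt (max (T\<^sup>2 - 4 * D) 0) / 2 \<le> x"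
proof -
  have "sqrt (max (T\<^sup>2 - 4 * D) 0) \<le> 2 * x - T"
  proof (rule real_le_lsqrt)
    show "0 \<le> 2 * x - T" using assms by simp
    have a1: "T\<^sup>2 - 4 * D \<le> (2 * x - T)\<^sup>2"
      using assms by (simp add: power2_eq_square algebra_simps)
    have a2: "0 \<le> (2 * x - T)\<^sup>2"
      using assms by simp
    show "max (T\<^sup>2 - 4 * D) 0 \<le> (2 * x - T)\<^sup>2"
      using a1 a2 by simp
  qed
  then show ?thesis by simp
qed

lemma crit_lt:
  fixes T D x :: real
  assumes "T < 2 * x" "x\<^sup>2 - T * x + D > 0"
  shows "T / 2 + sqrt (max (T\<^sup>2 - 4 * D) 0) / 2 < x"
proof -
  have "sqrt (max (T\<^sup>2 - 4 * D) 0) < 2 * x - T"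
  proof (rule real_less_lsqrt)
    show "0 \<le> 2 * x - T" using assms by simp
    have a1: "T\<^sup>2 - 4 * D < (2 * x - T)\<^sup>2"
      using assms by (simp add: power2_eq_square algebra_simps)
    have a2: "0 < (2 * x - T)\<^sup>2"
      using assms by simp
    show "max (T\<^sup>2 - 4 * D) 0 < (2 * x - T)\<^sup>2"
      using a1 a2 by simp
  qed
  then show ?thesis by simp
qed

lemma Re_bp_le: "Re (beta_plus m1 m2 a r l) \<le> x"
  if "trM m1 m2 a r l \<le> 2 * x" "x\<^sup>2 - trM m1 m2 a r l * x + DD m1 m2 a r l \<ge> 0"
  using crit_le[OF that] by (simp add: Re_bp discr_eq)

lemma Re_bp_lt: "Re (beta_plus m1 m2 a r l) < x"
  if "trM m1 m2 a r l < 2 * x" "x\<^sup>2 - trM m1 m2 a r l * x + DD m1 m2 a r l > 0"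
  using crit_lt[OF that] by (simp add: Re_bp discr_eq)

lemma Re_bm_le_bp: "Re (beta_minus m1 m2 a r l) \<le> Re (beta_plus m1 m2 a r l)"
  by (simp add: Re_bp Re_bm)

lemma Re_bm_le: "Re (beta_minus m1 m2 a r l) \<le> trM m1 m2 a r l / 2"
  by (simp add: Re_bm)

lemma isCont_discr: "isCont (\<lambda>l. discr m1 m2 a r l) l0"
  unfolding discr_def by (intro continuous_intros)

lemma isCont_Re_bp: "isCont (\<lambda>l. Re (beta_plus m1 m2 a r l)) l0"
proof -
  have c1: "isCont (\<lambda>l. max (discr m1 m2 a r l) 0) l0"
    by (intro continuous_max isCont_discr continuous_const)
  have c2: "isCont (\<lambda>l. sqrt (max (discr m1 m2 a r l) 0)) l0"
    by (rule continuous_real_sqrt[OF c1])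
  have c3: "isCont (\<lambda>l. trM m1 m2 a r l) l0"
    unfolding trM_def by (intro continuous_intros)
  have "isCont (\<lambda>l. trM m1 m2 a r l / 2 + sqrt (max (discr m1 m2 a r l) 0) / 2) l0"
    by (intro continuous_add continuous_divide c2 c3 continuous_const) simp_all
  then show ?thesis unfolding Re_bp .
qed

lemma ev_metric: assumes "eventually P (nhds (a::real))" shows "\<exists>e>0. \<forall>x. \<bar>x - a\<bar> < e \<longrightarrow> P x"
  using assms unfolding eventually_nhds_metric dist_real_def .

lemma DD_diff: "DD m1 m2 a r l - DD m1 m2 a r0 l = (r - r0) * (m1 * m2 * (r + r0) + m1 * a\<^sup>2 + m2 - l * m2)"
  by (simp add: DD_def algebra_simps power2_eq_square)

lemma DD_gfun: "0 < m2 \<Longrightarrow> 0 < r \<Longrightarrow> DD m1 m2 a r l = m2 * r * (gfun m1 m2 a r - l)"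
  by (simp add: DD_def gfun_def field_simps)


lemma sgn3: "(r::real) = (lam - l) / 2 \<Longrightarrow>
   (lam < l \<longrightarrow> r < 0) \<and> (lam = l \<longrightarrow> r = 0) \<and> (lam > l \<longrightarrow> r > 0)"
  by auto

lemma ev_gt: fixes f :: "real \<Rightarrow> real" assumes "isCont f a" "c < f a" shows "eventually (\<lambda>x. c < f x) (nhds (a::real))"
proof -
  note that = assms(2)
  from assms(1) have "(f \<longlongrightarrow> f a) (nhds a)" by (simp add: isCont_def tendsto_at_iff_tendsto_nhds)
  from order_tendstoD(1)[OF this that] show ?thesis .
qed

lemma ev_lt: fixes f :: "real \<Rightarrow> real" assumes "isCont f a" "f a < c" shows "eventually (\<lambda>x. f x < c) (nhds (a::real))"
proof -
  note that = assms(2)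
  from assms(1) have "(f \<longlongrightarrow> f a) (nhds a)" by (simp add: isCont_def tendsto_at_iff_tendsto_nhds)
  from order_tendstoD(2)[OF this that] show ?thesis .
qed

theorem lemma3p1:
  fixes mu1 mu2 alpha :: real and rho :: "nat \<Rightarrow> real" and b :: bc
  assumes mu1: "0 < mu1" and mu2: "0 < mu2" and alpha: "0 < alpha"
    and spec: "laplace_spectrum b rho"
  defines "bp \<equiv> \<lambda>k lam. beta_plus mu1 mu2 alpha (rho k) lam"
    and "bm \<equiv> \<lambda>k lam. beta_minus mu1 mu2 alpha (rho k) lam"
    and "l0 \<equiv> lambda0 mu1 mu2 alpha rho"
    and "l1 \<equiv> lambda1 mu1 mu2 alpha rho"
  shows
   "(\<forall>k0. l0 < l1 \<and> 1 \<le> k0 \<and> 0 < rho k0 \<and> gfun mu1 mu2 alpha (rho k0) = l0 \<and>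
      (\<forall>k\<ge>1. 0 < rho k \<and> gfun mu1 mu2 alpha (rho k) = l0 \<longrightarrow> rho k = rho k0) \<longrightarrow>
      (\<exists>\<epsilon>>0. \<forall>lam. 0 < lam \<and> \<bar>lam - l0\<bar> < \<epsilon> \<longrightarrow>
          Im (bp k0 lam) = 0 \<and>
          (\<forall>j\<ge>1. Re (bp j lam) \<le> Re (bp k0 lam) \<and> Re (bm j lam) \<le> Re (bp k0 lam)) \<and>
          (\<forall>k\<ge>1. rho k = rho k0 \<longrightarrow>
             Im (bp k lam) = 0 \<and>
             (lam < l0 \<longrightarrow> Re (bp k lam) < 0) \<and>
             (lam = l0 \<longrightarrow> Re (bp k lam) = 0) \<and>
             (lam > l0 \<longrightarrow> Re (bp k lam) > 0))) \<and>
      (\<forall>j\<ge>1. Re (bm j l0) < 0 \<and> (rho j \<noteq> rho k0 \<longrightarrow> Re (bp j l0) < 0)))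
    \<and>
    (l1 < l0 \<longrightarrow>
      (\<exists>\<epsilon>>0. \<forall>lam. 0 < lam \<and> \<bar>lam - l1\<bar> < \<epsilon> \<longrightarrow>
          bp 1 lam = cnj (bm 1 lam) \<and> Im (bp 1 lam) \<noteq> 0 \<and>
          Re (bp 1 lam) = Re (bm 1 lam) \<and>
          (\<forall>j\<ge>1. Re (bp j lam) \<le> Re (bp 1 lam) \<and> Re (bm j lam) \<le> Re (bp 1 lam)) \<and>
          (lam < l1 \<longrightarrow> Re (bp 1 lam) < 0) \<and>
          (lam = l1 \<longrightarrow> Re (bp 1 lam) = 0) \<and>
          (lam > l1 \<longrightarrow> Re (bp 1 lam) > 0)) \<and>
      (\<forall>k>1. Re (bp k l1) < 0 \<and> Re (bm k l1) < 0))"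
  proof -
  have nn: "\<And>k. 1 \<le> k \<Longrightarrow> 0 \<le> rho k" and stp: "\<And>k. 1 \<le> k \<Longrightarrow> rho k \<le> rho (Suc k)"
    and lim: "filterlim rho at_top sequentially" and r12: "rho 1 < rho 2"
    using spec unfolding laplace_spectrum_def by auto
  have mono: "rho i \<le> rho j" if "1 \<le> i" "i \<le> j" for i j
    using that(2)
  proof (induction rule: dec_induct)
    case base then show ?case by simp
  next
    case (step n) then show ?case using \<open>1 \<le> i\<close> stp[of n] by linarith
  qed
  have ge1: "rho 1 \<le> rho j" if "1 \<le> j" for j using mono[OF _ that] by simp
  have gnn: "0 \<le> gfun mu1 mu2 alpha r" if "0 < r" for r
    unfolding gfun_def using mu1 mu2 that
    by (intro divide_nonneg_nonneg mult_nonneg_nonneg) auto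
  have gl0: "l0 \<le> gfun mu1 mu2 alpha (rho j)" if "1 \<le> j" "0 < rho j" for j
    unfolding l0_def lambda0_def
  proof (rule cINF_lower)
    show "bdd_below ((\<lambda>k. gfun mu1 mu2 alpha (rho k)) ` {k. 1 \<le> k \<and> 0 < rho k})"
      by (rule bdd_belowI2[where m=0]) (auto intro: gnn)
    show "j \<in> {k. 1 \<le> k \<and> 0 < rho k}" using that by simp
  qed
  have Tle: "trM mu1 mu2 alpha (rho j) lam \<le> lam - l1" if "1 \<le> j" for j lam
  proof -
    have "mu1 * rho 1 \<le> mu1 * rho j" "mu2 * rho 1 \<le> mu2 * rho j"
      using ge1[OF that] mu1 mu2 by (auto intro: mult_left_mono)
    then show ?thesis unfolding trM_def l1_def lambda1_def by linarith
  qed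
  have Dpos: "0 < DD mu1 mu2 alpha (rho j) lam" if "1 \<le> j" "lam < l0" for j lam
  proof (cases "rho j = 0")
    case True then show ?thesis using alpha by (simp add: DD_def)
  next
    case False
    then have rp: "0 < rho j" using nn[OF that(1)] by simp
    have "0 < gfun mu1 mu2 alpha (rho j) - lam" using gl0[OF that(1) rp] that(2) by simp
    then show ?thesis using DD_gfun[OF mu2 rp] mu2 rp by simp
  qed
  have Dnn: "0 \<le> DD mu1 mu2 alpha (rho j) l0" if "1 \<le> j" for j
  proof (cases "rho j = 0")
    case True then show ?thesis using alpha by (simp add: DD_def)
  next
    case False
    then have rp: "0 < rho j" using nn[OF that(1)] by simp
    have "0 \<le> gfun mu1 mu2 alpha (rho j) - l0" using gl0[OF that(1) rp] by simp
    then show ?thesis using DD_gfun[OF mu2 rp] mu2 rp by simp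
  qed

  have P2: "l1 < l0 \<longrightarrow>
      (\<exists>\<epsilon>>0. \<forall>lam. 0 < lam \<and> \<bar>lam - l1\<bar> < \<epsilon> \<longrightarrow>
          bp 1 lam = cnj (bm 1 lam) \<and> Im (bp 1 lam) \<noteq> 0 \<and>
          Re (bp 1 lam) = Re (bm 1 lam) \<and>
          (\<forall>j\<ge>1. Re (bp j lam) \<le> Re (bp 1 lam) \<and> Re (bm j lam) \<le> Re (bp 1 lam)) \<and>
          (lam < l1 \<longrightarrow> Re (bp 1 lam) < 0) \<and>
          (lam = l1 \<longrightarrow> Re (bp 1 lam) = 0) \<and>
          (lam > l1 \<longrightarrow> Re (bp 1 lam) > 0)) \<and>
      (\<forall>k>1. Re (bp k l1) < 0 \<and> Re (bm k l1) < 0)"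
  proof
    assume l10: "l1 < l0"
    define r1 where "r1 = rho 1"
    define m where "m = rho 2"
    have m0: "0 < m" using r12 nn[of 1] unfolding m_def by simp
    have T1: "trM mu1 mu2 alpha r1 lam = lam - l1" for lam
      unfolding trM_def l1_def lambda1_def r1_def by simp
    have D1: "0 < DD mu1 mu2 alpha r1 l1" unfolding r1_def using Dpos[of 1 l1] l10 by simp
    have E1: "eventually (\<lambda>lam. discr mu1 mu2 alpha r1 lam < 0) (nhds l1)"
      by (rule ev_lt[OF isCont_discr]) (use D1 in \<open>simp add: discr_eq T1\<close>)
    define B where "B = (\<lambda>lam. mu2 * (l0 - lam) - (mu1 + mu2) * \<bar>(lam - l1) / 2\<bar>)"
    have cB: "isCont B l1" unfolding B_def by (intro continuous_intros) simp
    have E2: "eventually (\<lambda>lam. 0 < B lam) (nhds l1)"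
      by (rule ev_gt[OF cB]) (use l10 mu2 in \<open>simp add: B_def\<close>)
    have cB3: "isCont (\<lambda>lam. m * B lam - ((lam - l1) / 2)\<^sup>2) l1"
      by (intro continuous_intros cB) simp
    have E3: "eventually (\<lambda>lam. 0 < m * B lam - ((lam - l1) / 2)\<^sup>2) (nhds l1)"
      by (rule ev_gt[OF cB3]) (use l10 mu2 m0 in \<open>simp add: B_def\<close>)
    have E4: "eventually (\<lambda>lam. lam < l0) (nhds l1)"
      by (rule ev_lt[where f="\<lambda>x. x"]) (use l10 in auto)
    obtain e where e: "e > 0" and he: "\<And>lam. \<bar>lam - l1\<bar> < e \<Longrightarrow>
        discr mu1 mu2 alpha r1 lam < 0 \<and> 0 < B lam \<and> 0 < m * B lam - ((lam - l1) / 2)\<^sup>2 \<and> lam < l0"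
      using ev_metric[OF eventually_conj[OF E1 eventually_conj[OF E2 eventually_conj[OF E3 E4]]]] by blast
    have main: "bp 1 lam = cnj (bm 1 lam) \<and> Im (bp 1 lam) \<noteq> 0 \<and>
          Re (bp 1 lam) = Re (bm 1 lam) \<and>
          (\<forall>j\<ge>1. Re (bp j lam) \<le> Re (bp 1 lam) \<and> Re (bm j lam) \<le> Re (bp 1 lam)) \<and>
          (lam < l1 \<longrightarrow> Re (bp 1 lam) < 0) \<and>
          (lam = l1 \<longrightarrow> Re (bp 1 lam) = 0) \<and>
          (lam > l1 \<longrightarrow> Re (bp 1 lam) > 0)" if "\<bar>lam - l1\<bar> < e" for lam
    proof -
      note h = he[OF that]
      define d where "d = discr mu1 mu2 alpha r1 lam"
      have d0: "d < 0" using h d_def by simp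
      have bp1: "bp 1 lam = beta_plus mu1 mu2 alpha r1 lam" by (simp add: bp_def r1_def)
      have bm1: "bm 1 lam = beta_minus mu1 mu2 alpha r1 lam" by (simp add: bm_def r1_def)
      have Re1: "Re (bp 1 lam) = (lam - l1) / 2"
        unfolding bp1 Re_bp T1 d_def[symmetric] using d0 by simp
      have Rem1: "Re (bm 1 lam) = (lam - l1) / 2"
        unfolding bm1 Re_bm T1 d_def[symmetric] using d0 by simp
      have Im1: "Im (bp 1 lam) = sqrt (- d) / 2"
        unfolding bp1 Im_bp d_def[symmetric] using d0 by simp
      have Imm1: "Im (bm 1 lam) = - sqrt (- d) / 2"
        unfolding bm1 Im_bm d_def[symmetric] using d0 by simp
      have c1: "bp 1 lam = cnj (bm 1 lam)"
        using Re1 Rem1 Im1 Imm1 by (intro complex_eqI) auto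
      have "0 < sqrt (- d)" using d0 by simp
      then have i1: "Im (bp 1 lam) \<noteq> 0" using Im1 by linarith
      define x where "x = (lam - l1) / 2"
      have dom: "Re (bp j lam) \<le> x" if j: "1 \<le> j" for j
      proof (cases "rho j = rho 1")
        case True then show ?thesis using Re1 unfolding x_def by (simp add: bp_def)
      next
        case False
        then have j2: "2 \<le> j" using j by (cases "j = 1") auto
        define r where "r = rho j"
        have rm: "m \<le> r" unfolding r_def m_def using mono[OF _ j2] by simp
        have r0: "0 < r" using rm m0 by simp
        have r1r: "r1 \<le> r" using ge1[OF j] unfolding r_def r1_def .
        have r10: "0 \<le> r1" using nn[of 1] unfolding r1_def by simp
        define s where "s = (mu1 + mu2) * (r - r1)"
        have Tj: "trM mu1 mu2 alpha r lam = 2 * x - s"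
        proof -
          have "2 * x = lam - l1" unfolding x_def by simp
          then show ?thesis
            unfolding trM_def s_def l1_def lambda1_def r1_def by (simp add: algebra_simps)
        qed
        have s0: "0 \<le> s" unfolding s_def using mu1 mu2 r1r by simp
        have ss: "s \<le> (mu1 + mu2) * r" unfolding s_def using mu1 mu2 r10
          by (simp add: algebra_simps)
        have "\<bar>s * x\<bar> \<le> (mu1 + mu2) * r * \<bar>x\<bar>"
          using mult_right_mono[OF ss abs_ge_zero[of x]] s0 by (simp add: abs_mult)
        then have h1: "- ((mu1 + mu2) * r * \<bar>x\<bar>) \<le> s * x" by linarith
        have "l0 - lam \<le> gfun mu1 mu2 alpha r - lam" using gl0[OF j] r0 unfolding r_def by simp
        then have "mu2 * r * (l0 - lam) \<le> mu2 * r * (gfun mu1 mu2 alpha r - lam)"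
          by (rule mult_left_mono) (use mu2 r0 in simp)
        then have h2: "mu2 * r * (l0 - lam) \<le> DD mu1 mu2 alpha r lam"
          using DD_gfun[OF mu2 r0] by simp
        have h3: "m * B lam \<le> r * B lam" by (rule mult_right_mono) (use rm h in auto)
        have h4: "r * B lam = mu2 * r * (l0 - lam) - (mu1 + mu2) * r * \<bar>x\<bar>"
          unfolding B_def x_def by (simp add: algebra_simps)
        have q: "x\<^sup>2 - trM mu1 mu2 alpha r lam * x + DD mu1 mu2 alpha r lam
            = - x\<^sup>2 + s * x + DD mu1 mu2 alpha r lam"
          unfolding Tj by (simp add: power2_eq_square algebra_simps)
        have h5: "0 < m * B lam - x\<^sup>2" using h unfolding x_def by simp
        have "0 \<le> x\<^sup>2 - trM mu1 mu2 alpha r lam * x + DD mu1 mu2 alpha r lam"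
          unfolding q using h1 h2 h3 h4 h5 by linarith
        moreover have "trM mu1 mu2 alpha r lam \<le> 2 * x" using Tj s0 by simp
        ultimately have "Re (beta_plus mu1 mu2 alpha r lam) \<le> x" by (rule Re_bp_le[rotated])
        then show ?thesis unfolding bp_def r_def by simp
      qed
      have domm: "Re (bm j lam) \<le> x" if "1 \<le> j" for j
        using dom[OF that] Re_bm_le_bp[of mu1 mu2 alpha "rho j" lam] by (simp add: bp_def bm_def)
      have dd: "\<forall>j\<ge>1. Re (bp j lam) \<le> Re (bp 1 lam) \<and> Re (bm j lam) \<le> Re (bp 1 lam)"
        using dom domm unfolding Re1 x_def by blast
      have eq: "Re (bp 1 lam) = Re (bm 1 lam)" using Re1 Rem1 by simp
      note sg = sgn3[OF Re1]
      have sg1: "lam < l1 \<longrightarrow> Re (bp 1 lam) < 0" using sg by (rule conjunct1)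
      have sg2: "lam = l1 \<longrightarrow> Re (bp 1 lam) = 0" using sg by (metis conjunct1 conjunct2)
      have sg3: "lam > l1 \<longrightarrow> Re (bp 1 lam) > 0" using sg by (metis conjunct2)
      show ?thesis using c1 i1 eq dd sg1 sg2 sg3 by (intro conjI) assumption+
    qed
    have last: "Re (bp k l1) < 0 \<and> Re (bm k l1) < 0" if "k > 1" for k
    proof -
      have k1: "1 \<le> k" "2 \<le> k" using that by auto
      have "rho 2 \<le> rho k" using mono[OF _ k1(2)] by simp
      then have rk: "rho 1 < rho k" using r12 by simp
      have "mu1 * rho 1 < mu1 * rho k" "mu2 * rho 1 < mu2 * rho k" using rk mu1 mu2 by auto
      then have T: "trM mu1 mu2 alpha (rho k) l1 < 0"
        unfolding trM_def l1_def lambda1_def by linarith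
      have D: "0 < DD mu1 mu2 alpha (rho k) l1" using Dpos[OF k1(1) l10] .
      have "Re (bp k l1) < 0" unfolding bp_def using Re_bp_lt[of mu1 mu2 alpha "rho k" l1 0] T D by simp
      moreover have "Re (bm k l1) < 0" unfolding bm_def
        using Re_bm_le[of mu1 mu2 alpha "rho k" l1] T by simp
      ultimately show ?thesis by simp
    qed
    show "(\<exists>\<epsilon>>0. \<forall>lam. 0 < lam \<and> \<bar>lam - l1\<bar> < \<epsilon> \<longrightarrow>
          bp 1 lam = cnj (bm 1 lam) \<and> Im (bp 1 lam) \<noteq> 0 \<and>
          Re (bp 1 lam) = Re (bm 1 lam) \<and>
          (\<forall>j\<ge>1. Re (bp j lam) \<le> Re (bp 1 lam) \<and> Re (bm j lam) \<le> Re (bp 1 lam)) \<and>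
          (lam < l1 \<longrightarrow> Re (bp 1 lam) < 0) \<and>
          (lam = l1 \<longrightarrow> Re (bp 1 lam) = 0) \<and>
          (lam > l1 \<longrightarrow> Re (bp 1 lam) > 0)) \<and>
      (\<forall>k>1. Re (bp k l1) < 0 \<and> Re (bm k l1) < 0)"
    proof (intro conjI)
      show "\<exists>\<epsilon>>0. \<forall>lam. 0 < lam \<and> \<bar>lam - l1\<bar> < \<epsilon> \<longrightarrow>
          bp 1 lam = cnj (bm 1 lam) \<and> Im (bp 1 lam) \<noteq> 0 \<and>
          Re (bp 1 lam) = Re (bm 1 lam) \<and>
          (\<forall>j\<ge>1. Re (bp j lam) \<le> Re (bp 1 lam) \<and> Re (bm j lam) \<le> Re (bp 1 lam)) \<and>
          (lam < l1 \<longrightarrow> Re (bp 1 lam) < 0) \<and>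
          (lam = l1 \<longrightarrow> Re (bp 1 lam) = 0) \<and>
          (lam > l1 \<longrightarrow> Re (bp 1 lam) > 0)"
        apply (rule exI[of _ e])
        apply (rule conjI)
         apply (rule e)
        apply (intro allI impI)
        apply (rule main)
        apply simp
        done
      show "\<forall>k>1. Re (bp k l1) < 0 \<and> Re (bm k l1) < 0" using last by simp
    qed
  qed
  have P1: "\<forall>k0. l0 < l1 \<and> 1 \<le> k0 \<and> 0 < rho k0 \<and> gfun mu1 mu2 alpha (rho k0) = l0 \<and>
      (\<forall>k\<ge>1. 0 < rho k \<and> gfun mu1 mu2 alpha (rho k) = l0 \<longrightarrow> rho k = rho k0) \<longrightarrow>
      (\<exists>\<epsilon>>0. \<forall>lam. 0 < lam \<and> \<bar>lam - l0\<bar> < \<epsilon> \<longrightarrow>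
          Im (bp k0 lam) = 0 \<and>
          (\<forall>j\<ge>1. Re (bp j lam) \<le> Re (bp k0 lam) \<and> Re (bm j lam) \<le> Re (bp k0 lam)) \<and>
          (\<forall>k\<ge>1. rho k = rho k0 \<longrightarrow>
             Im (bp k lam) = 0 \<and>
             (lam < l0 \<longrightarrow> Re (bp k lam) < 0) \<and>
             (lam = l0 \<longrightarrow> Re (bp k lam) = 0) \<and>
             (lam > l0 \<longrightarrow> Re (bp k lam) > 0))) \<and>
      (\<forall>j\<ge>1. Re (bm j l0) < 0 \<and> (rho j \<noteq> rho k0 \<longrightarrow> Re (bp j l0) < 0))"
  proof (intro allI impI)
    fix k0
    assume H: "l0 < l1 \<and> 1 \<le> k0 \<and> 0 < rho k0 \<and> gfun mu1 mu2 alpha (rho k0) = l0 \<and>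
      (\<forall>k\<ge>1. 0 < rho k \<and> gfun mu1 mu2 alpha (rho k) = l0 \<longrightarrow> rho k = rho k0)"
    then have l01: "l0 < l1" and k01: "1 \<le> k0" and r0p: "0 < rho k0"
      and g0: "gfun mu1 mu2 alpha (rho k0) = l0"
      and uniq: "\<And>k. 1 \<le> k \<Longrightarrow> 0 < rho k \<Longrightarrow> gfun mu1 mu2 alpha (rho k) = l0 \<Longrightarrow> rho k = rho k0"
      by auto
    define r0 where "r0 = rho k0"
    have r0pos: "0 < r0" using r0p unfolding r0_def .
    have D0: "DD mu1 mu2 alpha r0 lam = mu2 * r0 * (l0 - lam)" for lam
      using DD_gfun[OF mu2 r0p] g0 unfolding r0_def by simp
    have T0le: "trM mu1 mu2 alpha r0 lam \<le> lam - l1" for lam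
      using Tle[OF k01] unfolding r0_def .
    have Dstrict: "0 < DD mu1 mu2 alpha (rho j) l0" if "1 \<le> j" "rho j \<noteq> r0" for j
    proof (cases "rho j = 0")
      case True then show ?thesis using alpha by (simp add: DD_def)
    next
      case False
      then have rp: "0 < rho j" using nn[OF that(1)] by simp
      have "gfun mu1 mu2 alpha (rho j) \<noteq> l0" using uniq[OF that(1) rp] that(2) unfolding r0_def by auto
      then have "0 < gfun mu1 mu2 alpha (rho j) - l0" using gl0[OF that(1) rp] by simp
      then show ?thesis using DD_gfun[OF mu2 rp] mu2 rp by simp
    qed
    have lastp: "Re (bm j l0) < 0 \<and> (rho j \<noteq> rho k0 \<longrightarrow> Re (bp j l0) < 0)" if j: "1 \<le> j" for j
    proof -
      have T: "trM mu1 mu2 alpha (rho j) l0 < 0" using Tle[OF j, of l0] l01 by simp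
      have "Re (beta_minus mu1 mu2 alpha (rho j) l0) < 0"
        using Re_bm_le[of mu1 mu2 alpha "rho j" l0] T by simp
      moreover have "Re (beta_plus mu1 mu2 alpha (rho j) l0) < 0" if "rho j \<noteq> rho k0"
        using Re_bp_lt[of mu1 mu2 alpha "rho j" l0 0] T Dstrict[OF j] that unfolding r0_def by simp
      ultimately show ?thesis unfolding bp_def bm_def by simp
    qed
    define bf where "bf = (\<lambda>lam. Re (beta_plus mu1 mu2 alpha r0 lam))"
    have cb: "isCont bf l0" unfolding bf_def by (rule isCont_Re_bp)
    have T0n: "trM mu1 mu2 alpha r0 l0 < 0" using T0le[of l0] l01 by simp
    have bf0: "bf l0 = 0"
    proof -
      have "bf l0 = trM mu1 mu2 alpha r0 l0 / 2 + sqrt (max ((trM mu1 mu2 alpha r0 l0)\<^sup>2 - 4 * DD mu1 mu2 alpha r0 l0) 0) / 2"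
        by (simp add: bf_def Re_bp discr_eq)
      also have "\<dots> = trM mu1 mu2 alpha r0 l0 / 2 + \<bar>trM mu1 mu2 alpha r0 l0\<bar> / 2"
        by (simp add: D0)
      also have "\<dots> = 0" using T0n by simp
      finally show ?thesis .
    qed
    have "eventually (\<lambda>j. r0 < rho j) sequentially"
      using lim unfolding filterlim_at_top_dense by blast
    then obtain N where N: "\<And>j. N \<le> j \<Longrightarrow> r0 < rho j" by (auto simp: eventually_sequentially)
    have ex: "\<exists>j. 1 \<le> j \<and> r0 < rho j" using N[of "max N 1"] by (intro exI[of _ "max N 1"]) auto
    define jp where "jp = (LEAST j. 1 \<le> j \<and> r0 < rho j)"
    have jp: "1 \<le> jp \<and> r0 < rho jp" unfolding jp_def by (rule LeastI_ex[OF ex])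
    have jpmin: "jp \<le> j" if "1 \<le> j" "r0 < rho j" for j
      unfolding jp_def by (rule Least_le) (use that in simp)
    define rp where "rp = rho jp"
    define h where "h = (\<lambda>r. mu1 * mu2 * (r + r0) + mu1 * alpha\<^sup>2 + mu2 - l0 * mu2)"
    have hid: "(r - r0) * h r = DD mu1 mu2 alpha r l0" for r
      using DD_diff[of mu1 mu2 alpha r l0 r0] D0[of l0] unfolding h_def by simp
    have hp: "0 < h rp"
    proof -
      have "0 < (rp - r0) * h rp" unfolding hid rp_def
        by (rule Dstrict) (use jp in auto)
      moreover have "0 < rp - r0" using jp unfolding rp_def by simp
      ultimately show ?thesis using zero_less_mult_pos by blast
    qed
    define A where "A = {j. 1 \<le> j \<and> j < k0 \<and> rho j < r0}"
    have finA: "finite A" by (rule finite_subset[of _ "{..<k0}"]) (auto simp: A_def)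
    have hA: "h (rho j) < 0" if "j \<in> A" for j
    proof -
      have j: "1 \<le> j" "rho j < r0" using that unfolding A_def by auto
      have "0 < (rho j - r0) * h (rho j)" unfolding hid by (rule Dstrict) (use j in auto)
      then show ?thesis using j(2) by (simp add: zero_less_mult_iff)
    qed
    define br where "br = (\<lambda>r lam. h r + bf lam * (mu1 + mu2) - (lam - l0) * mu2)"
    have cbr: "isCont (br r) l0" for r unfolding br_def by (intro continuous_intros cb)
    have br0: "br r l0 = h r" for r unfolding br_def using bf0 by simp
    have E1: "eventually (\<lambda>lam. lam < l1) (nhds l0)"
      by (rule ev_lt[where f="\<lambda>x. x"]) (use l01 in auto)
    have E2: "eventually (\<lambda>lam. 0 < discr mu1 mu2 alpha r0 lam) (nhds l0)"
      by (rule ev_gt[OF isCont_discr]) (use T0n in \<open>simp add: discr_eq D0\<close>)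
    have cE3: "isCont (\<lambda>lam. lam - l1 - 2 * bf lam) l0" by (intro continuous_intros cb)
    have E3: "eventually (\<lambda>lam. lam - l1 - 2 * bf lam < 0) (nhds l0)"
      by (rule ev_lt[OF cE3]) (use l01 bf0 in simp)
    have E4: "eventually (\<lambda>lam. 0 < br rp lam) (nhds l0)"
      by (rule ev_gt[OF cbr]) (use hp br0 in simp)
    have E5: "eventually (\<lambda>lam. \<forall>j\<in>A. br (rho j) lam < 0) (nhds l0)"
    proof (rule eventually_ball_finite[OF finA], rule ballI)
      fix j assume "j \<in> A"
      show "eventually (\<lambda>lam. br (rho j) lam < 0) (nhds l0)"
        by (rule ev_lt[OF cbr]) (use hA[OF \<open>j \<in> A\<close>] br0 in simp)
    qed
    obtain e where e: "e > 0" and he: "\<And>lam. \<bar>lam - l0\<bar> < e \<Longrightarrow>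
        lam < l1 \<and> 0 < discr mu1 mu2 alpha r0 lam \<and> lam - l1 - 2 * bf lam < 0 \<and>
        0 < br rp lam \<and> (\<forall>j\<in>A. br (rho j) lam < 0)"
      using ev_metric[OF eventually_conj[OF E1 eventually_conj[OF E2 eventually_conj[OF E3 eventually_conj[OF E4 E5]]]]]
      by blast
    have key: "bb\<^sup>2 - trM mu1 mu2 alpha r lam * bb + DD mu1 mu2 alpha r lam
        = (bb\<^sup>2 - trM mu1 mu2 alpha r0 lam * bb + DD mu1 mu2 alpha r0 lam)
          + (r - r0) * (h r + bb * (mu1 + mu2) - (lam - l0) * mu2)" for bb r lam
      unfolding trM_def DD_def h_def by (simp add: power2_eq_square algebra_simps)
    have main: "Im (bp k0 lam) = 0 \<and>
          (\<forall>j\<ge>1. Re (bp j lam) \<le> Re (bp k0 lam) \<and> Re (bm j lam) \<le> Re (bp k0 lam)) \<and>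
          (\<forall>k\<ge>1. rho k = rho k0 \<longrightarrow>
             Im (bp k lam) = 0 \<and>
             (lam < l0 \<longrightarrow> Re (bp k lam) < 0) \<and>
             (lam = l0 \<longrightarrow> Re (bp k lam) = 0) \<and>
             (lam > l0 \<longrightarrow> Re (bp k lam) > 0))" if lamE: "\<bar>lam - l0\<bar> < e" for lam
    proof -
      note hh = he[OF lamE]
      define T0 where "T0 = trM mu1 mu2 alpha r0 lam"
      define D where "D = DD mu1 mu2 alpha r0 lam"
      define d where "d = discr mu1 mu2 alpha r0 lam"
      have dpos: "0 < d" using hh d_def by simp
      have dd: "d = T0\<^sup>2 - 4 * D" unfolding d_def T0_def D_def by (rule discr_eq)
      have bval: "bf lam = T0 / 2 + sqrt d / 2"
        using dpos unfolding bf_def Re_bp T0_def[symmetric] d_def[symmetric] by simp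
      have Imz: "Im (beta_plus mu1 mu2 alpha r0 lam) = 0"
        using dpos unfolding Im_bp d_def[symmetric] by simp
      have sq: "(sqrt d)\<^sup>2 = d" using dpos by simp
      have root: "(bf lam)\<^sup>2 - T0 * bf lam + D = 0"
      proof -
        have "(bf lam)\<^sup>2 - T0 * bf lam + D = ((sqrt d)\<^sup>2 - (T0\<^sup>2 - 4 * D)) / 4"
          unfolding bval by (simp add: power2_eq_square field_simps)
        then show ?thesis using sq dd by simp
      qed
      have T0lt: "T0 < 0" using T0le[of lam] hh unfolding T0_def by simp
      have bpk: "bp k lam = beta_plus mu1 mu2 alpha r0 lam" if "rho k = rho k0" for k
        using that unfolding bp_def r0_def by simp
      have dom: "Re (bp j lam) \<le> bf lam" if j: "1 \<le> j" for j
      proof -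
        define r where "r = rho j"
        consider "r = r0" | "r0 < r" | "r < r0" by linarith
        then show ?thesis
        proof cases
          case 1 then show ?thesis unfolding bp_def bf_def r_def by simp
        next
          case 2
          have jj: "jp \<le> j" using jpmin[OF j] 2 unfolding r_def by simp
          have rpr: "rp \<le> r" unfolding rp_def r_def using mono[OF _ jj] jp by simp
          have "br r lam = br rp lam + mu1 * mu2 * (r - rp)" unfolding br_def h_def
            by (simp add: algebra_simps)
          moreover have "0 \<le> mu1 * mu2 * (r - rp)" using mu1 mu2 rpr by simp
          ultimately have brpos: "0 < br r lam" using hh by simp
          have "0 \<le> (r - r0) * br r lam" using 2 brpos by simp
          then have q: "0 \<le> (bf lam)\<^sup>2 - trM mu1 mu2 alpha r lam * bf lam + DD mu1 mu2 alpha r lam"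
            unfolding key[of "bf lam" r lam] using root unfolding T0_def D_def br_def by simp
          have "trM mu1 mu2 alpha r lam \<le> 2 * bf lam" using Tle[OF j, of lam] hh unfolding r_def by simp
          from Re_bp_le[OF this q] show ?thesis unfolding bp_def r_def by simp
        next
          case 3
          have jk: "j < k0"
          proof (rule ccontr)
            assume "\<not> j < k0"
            then have "rho k0 \<le> rho j" using mono[OF k01] by simp
            then show False using 3 unfolding r_def r0_def by simp
          qed
          have "j \<in> A" unfolding A_def using j jk 3 r_def by simp
          then have brneg: "br r lam < 0" using hh unfolding r_def by blast
          have "0 \<le> (r - r0) * br r lam" using 3 brneg by (simp add: mult_nonneg_nonneg mult_nonpos_nonpos)
          then have q: "0 \<le> (bf lam)\<^sup>2 - trM mu1 mu2 alpha r lam * bf lam + DD mu1 mu2 alpha r lam"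
            unfolding key[of "bf lam" r lam] using root unfolding T0_def D_def br_def by simp
          have "trM mu1 mu2 alpha r lam \<le> 2 * bf lam" using Tle[OF j, of lam] hh unfolding r_def by simp
          from Re_bp_le[OF this q] show ?thesis unfolding bp_def r_def by simp
        qed
      qed
      have domm: "Re (bm j lam) \<le> bf lam" if "1 \<le> j" for j
        using dom[OF that] Re_bm_le_bp[of mu1 mu2 alpha "rho j" lam] unfolding bp_def bm_def by simp
      have bk0: "Re (bp k0 lam) = bf lam" unfolding bf_def using bpk[of k0] by simp
      have sgn: "(lam < l0 \<longrightarrow> bf lam < 0) \<and> (lam = l0 \<longrightarrow> bf lam = 0) \<and> (lam > l0 \<longrightarrow> bf lam > 0)"
      proof (intro conjI impI)
        assume "lam < l0"
        then have "0 < D" unfolding D_def D0 using mu2 r0pos by simp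
        then show "bf lam < 0" unfolding bf_def
          using Re_bp_lt[of mu1 mu2 alpha r0 lam 0] T0lt unfolding T0_def D_def by simp
      next
        assume "lam = l0" then show "bf lam = 0" using bf0 by simp
      next
        assume "lam > l0"
        then have "mu2 * r0 * (l0 - lam) < 0" using mu2 r0pos by (simp add: mult_pos_neg)
        then have "D < 0" unfolding D_def D0 .
        then have "\<bar>T0\<bar>\<^sup>2 < d" unfolding dd by simp
        then have "\<bar>T0\<bar> < sqrt d" by (rule real_less_rsqrt)
        then show "bf lam > 0" unfolding bval by simp
      qed
      show ?thesis
      proof (intro conjI allI impI)
        show "Im (bp k0 lam) = 0" using bpk[of k0] Imz by simp
      next
        fix j :: nat assume "1 \<le> j"
        then show "Re (bp j lam) \<le> Re (bp k0 lam)" using dom bk0 by simp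
      next
        fix j :: nat assume "1 \<le> j"
        then show "Re (bm j lam) \<le> Re (bp k0 lam)" using domm bk0 by simp
      next
        fix k :: nat assume "1 \<le> k" "rho k = rho k0"
        then show "Im (bp k lam) = 0" using bpk Imz by simp
      next
        fix k :: nat assume "1 \<le> k" "rho k = rho k0" "lam < l0"
        then show "Re (bp k lam) < 0" using bpk sgn unfolding bf_def by simp
      next
        fix k :: nat assume "1 \<le> k" "rho k = rho k0" "lam = l0"
        then show "Re (bp k lam) = 0" using bpk[of k] sgn unfolding bf_def by simp
      next
        fix k :: nat assume "1 \<le> k" "rho k = rho k0" "lam > l0"
        then show "Re (bp k lam) > 0" using bpk sgn unfolding bf_def by simp
      qed
    qed
    show "(\<exists>\<epsilon>>0. \<forall>lam. 0 < lam \<and> \<bar>lam - l0\<bar> < \<epsilon> \<longrightarrow>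
          Im (bp k0 lam) = 0 \<and>
          (\<forall>j\<ge>1. Re (bp j lam) \<le> Re (bp k0 lam) \<and> Re (bm j lam) \<le> Re (bp k0 lam)) \<and>
          (\<forall>k\<ge>1. rho k = rho k0 \<longrightarrow>
             Im (bp k lam) = 0 \<and>
             (lam < l0 \<longrightarrow> Re (bp k lam) < 0) \<and>
             (lam = l0 \<longrightarrow> Re (bp k lam) = 0) \<and>
             (lam > l0 \<longrightarrow> Re (bp k lam) > 0))) \<and>
      (\<forall>j\<ge>1. Re (bm j l0) < 0 \<and> (rho j \<noteq> rho k0 \<longrightarrow> Re (bp j l0) < 0))"
    proof (rule conjI)
      show "\<exists>\<epsilon>>0. \<forall>lam. 0 < lam \<and> \<bar>lam - l0\<bar> < \<epsilon> \<longrightarrow>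
          Im (bp k0 lam) = 0 \<and>
          (\<forall>j\<ge>1. Re (bp j lam) \<le> Re (bp k0 lam) \<and> Re (bm j lam) \<le> Re (bp k0 lam)) \<and>
          (\<forall>k\<ge>1. rho k = rho k0 \<longrightarrow>
             Im (bp k lam) = 0 \<and>
             (lam < l0 \<longrightarrow> Re (bp k lam) < 0) \<and>
             (lam = l0 \<longrightarrow> Re (bp k lam) = 0) \<and>
             (lam > l0 \<longrightarrow> Re (bp k lam) > 0))"
        apply (rule exI[of _ e])
        apply (rule conjI)
         apply (rule e)
        apply (intro allI impI)
        apply (rule main)
        apply simp
        done
      show "\<forall>j\<ge>1. Re (bm j l0) < 0 \<and> (rho j \<noteq> rho k0 \<longrightarrow> Re (bp j l0) < 0)"
        using lastp by blast
    qed
  qed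
  show ?thesis by (rule conjI[OF P1 P2])
qed


end
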